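(* Let $\alpha\le 2$ and $\delta\ge 0$, where if $\alpha\neq0$ we additionally require $\delta\le 1/\alpha^2$. Let $$c(u,v)=1+\alpha^2\delta(1-2u)(1-2v)\exp\{\alpha(u-u^2+v-v^2)\},\quad (u,v)\in[0,1]^2.$$ Then $c$ is totally positive of order 2 ($TP_2$), i.e. $c(u_1,v_1)c(u_2,v_2)-c(u_1,v_2)c(u_2,v_1)\ge0$ for all $u_1<u_2$, $v_1<v_2$ in $[0,1]$; in fact $\frac{\partial^2\ln c(u,v)}{\partial u\,\partial v}\ge 0$ on $[0,1]^2$.
   Context: $c$ is the density of the copula $C(u,v)=uv+\delta(1-e^{\alpha(u-u^2)})(1-e^{\alpha(v-v^2)})$; the constraint $|\delta|\le1/\alpha^2$ (for $\alpha\le2$, $\alpha\ne0$) is the parameter range for which $C$ is a copula, and for $\alpha=0$ any $\delta$ is allowed. *)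

theory Defs
  imports "HOL-Analysis.Analysis"
begin

definition cdens :: "real \<Rightarrow> real \<Rightarrow> real \<Rightarrow> real \<Rightarrow> real" where
  "cdens \<alpha> \<delta> u v = 1 + \<alpha>^2 * \<delta> * (1 - 2 * u) * (1 - 2 * v) * exp (\<alpha> * (u - u^2 + v - v^2))"

end

theory Submission
  imports Defs
begin

definition ff :: "real \<Rightarrow> real \<Rightarrow> real" where
  "ff a u = (1 - 2*u) * exp (a * (u - u^2))"

definition ffd :: "real \<Rightarrow> real \<Rightarrow> real" where
  "ffd a u = exp (a * (u - u^2)) * (a * (1 - 2*u)^2 - 2)"

lemma cdens_ff: "cdens a d u v = 1 + a^2 * d * ff a u * ff a v"
  unfolding cdens_def ff_def
  by (simp add: exp_add[symmetric] algebra_simps)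

lemma ff_deriv: "(ff a has_field_derivative ffd a u) (at u)"
  unfolding ff_def ffd_def
  by (auto intro!: derivative_eq_intros simp: power2_eq_square algebra_simps)

lemma ffd_nonpos:
  assumes "a \<le> 2" "0 \<le> u" "u \<le> 1"
  shows "ffd a u \<le> 0"
proof -
  have p: "0 \<le> u * (1 - u)" using assms by simp
  have s: "(1 - 2*u)^2 \<le> 1" using p by (simp add: power2_eq_square algebra_simps)
  have "a * (1 - 2*u)^2 \<le> 2"
  proof (cases "a \<ge> 0")
    case True
    then have "a * (1 - 2*u)^2 \<le> a * 1" using s by (intro mult_left_mono) auto
    then show ?thesis using assms by simp
  next
    case False
    then have "a * (1 - 2*u)^2 \<le> 0" by (simp add: mult_nonpos_nonneg)
    then show ?thesis by simp
  qed
  then show ?thesis unfolding ffd_def by (simp add: mult_nonneg_nonpos)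
qed

lemma ff_mono:
  assumes "a \<le> 2" "0 \<le> x" "x \<le> y" "y \<le> 1"
  shows "ff a y \<le> ff a x"
proof -
  have "\<forall>t. x \<le> t \<and> t \<le> y \<longrightarrow> (ff a has_real_derivative ffd a t) (at t)" using ff_deriv by blast
  from DERIV_nonpos_imp_nonincreasing[of x y "ff a"] show ?thesis
    using assms ff_deriv ffd_nonpos by (metis order_trans)
qed

theorem proposition3:
  fixes \<alpha> \<delta> :: real
  assumes "\<alpha> \<le> 2" and "\<delta> \<ge> 0" and "\<alpha> \<noteq> 0 \<Longrightarrow> \<delta> \<le> 1 / \<alpha>^2"
  shows "(\<forall>u1 u2 v1 v2. 0 \<le> u1 \<longrightarrow> u1 < u2 \<longrightarrow> u2 \<le> 1 \<longrightarrow> 0 \<le> v1 \<longrightarrow> v1 < v2 \<longrightarrow> v2 \<le> 1 \<longrightarrow>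
            cdens \<alpha> \<delta> u1 v1 * cdens \<alpha> \<delta> u2 v2 - cdens \<alpha> \<delta> u1 v2 * cdens \<alpha> \<delta> u2 v1 \<ge> 0)
       \<and> (\<forall>u v. u \<in> {0..1} \<longrightarrow> v \<in> {0..1} \<longrightarrow> cdens \<alpha> \<delta> u v > 0 \<longrightarrow>
            deriv (\<lambda>x. deriv (\<lambda>y. ln (cdens \<alpha> \<delta> x y)) v) u \<ge> 0)"
proof
  define k where "k = \<alpha>^2 * \<delta>"
  have k0: "k \<ge> 0" unfolding k_def using assms by simp
  have C: "cdens \<alpha> \<delta> x y = 1 + k * ff \<alpha> x * ff \<alpha> y" for x y
    unfolding cdens_ff k_def by simp
  show "\<forall>u1 u2 v1 v2. 0 \<le> u1 \<longrightarrow> u1 < u2 \<longrightarrow> u2 \<le> 1 \<longrightarrow> 0 \<le> v1 \<longrightarrow> v1 < v2 \<longrightarrow> v2 \<le> 1 \<longrightarrow>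
            cdens \<alpha> \<delta> u1 v1 * cdens \<alpha> \<delta> u2 v2 - cdens \<alpha> \<delta> u1 v2 * cdens \<alpha> \<delta> u2 v1 \<ge> 0"
  proof (intro allI impI)
    fix u1 u2 v1 v2 :: real
    assume h: "0 \<le> u1" "u1 < u2" "u2 \<le> 1" "0 \<le> v1" "v1 < v2" "v2 \<le> 1"
    have e: "cdens \<alpha> \<delta> u1 v1 * cdens \<alpha> \<delta> u2 v2 - cdens \<alpha> \<delta> u1 v2 * cdens \<alpha> \<delta> u2 v1
       = k * ((ff \<alpha> u2 - ff \<alpha> u1) * (ff \<alpha> v2 - ff \<alpha> v1))"
      unfolding C by (simp add: algebra_simps)
    have "ff \<alpha> u2 - ff \<alpha> u1 \<le> 0" using ff_mono[of \<alpha> u1 u2] h assms by simp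
    moreover have "ff \<alpha> v2 - ff \<alpha> v1 \<le> 0" using ff_mono[of \<alpha> v1 v2] h assms by simp
    ultimately show "cdens \<alpha> \<delta> u1 v1 * cdens \<alpha> \<delta> u2 v2 - cdens \<alpha> \<delta> u1 v2 * cdens \<alpha> \<delta> u2 v1 \<ge> 0"
      unfolding e using k0 by (simp add: mult_nonpos_nonpos)
  qed
  show "\<forall>u v. u \<in> {0..1} \<longrightarrow> v \<in> {0..1} \<longrightarrow> cdens \<alpha> \<delta> u v > 0 \<longrightarrow>
            deriv (\<lambda>x. deriv (\<lambda>y. ln (cdens \<alpha> \<delta> x y)) v) u \<ge> 0"
  proof (intro allI impI)
    fix u v :: real
    assume hu: "u \<in> {0..1}" and hv: "v \<in> {0..1}" and pos: "cdens \<alpha> \<delta> u v > 0"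
    define S where "S = {x. 0 < 1 + k * ff \<alpha> x * ff \<alpha> v}"
    have cf: "continuous_on UNIV (ff \<alpha>)" unfolding ff_def by (intro continuous_intros)
    have "open S" unfolding S_def
      by (intro open_Collect_less continuous_intros continuous_on_compose2[OF cf]) auto
    have uS: "u \<in> S" using pos unfolding S_def C by simp
    define G where "G x = k * ffd \<alpha> v * (ff \<alpha> x / (1 + k * ff \<alpha> x * ff \<alpha> v))" for x
    have inner: "deriv (\<lambda>y. ln (cdens \<alpha> \<delta> x y)) v = G x" if "x \<in> S" for x
    proof -
      have x0: "0 < 1 + k * ff \<alpha> x * ff \<alpha> v" using that unfolding S_def by simp
      have d1: "((\<lambda>y. 1 + k * ff \<alpha> x * ff \<alpha> y) has_field_derivative k * ff \<alpha> x * ffd \<alpha> v) (at v)"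
        by (rule derivative_eq_intros ff_deriv refl)+ simp
      have "((\<lambda>y. ln (1 + k * ff \<alpha> x * ff \<alpha> y)) has_field_derivative
           1 / (1 + k * ff \<alpha> x * ff \<alpha> v) * (k * ff \<alpha> x * ffd \<alpha> v)) (at v)"
        by (rule DERIV_chain2[OF DERIV_ln_divide[OF x0] d1])
      moreover have "1 / (1 + k * ff \<alpha> x * ff \<alpha> v) * (k * ff \<alpha> x * ffd \<alpha> v) = G x"
        unfolding G_def by simp
      ultimately have "((\<lambda>y. ln (1 + k * ff \<alpha> x * ff \<alpha> y)) has_field_derivative G x) (at v)" by simp
      then show ?thesis unfolding C by (rule DERIV_imp_deriv)
    qed
    define D where "D = k * ffd \<alpha> v * ffd \<alpha> u / (1 + k * ff \<alpha> u * ff \<alpha> v)^2"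
    have u0: "0 < 1 + k * ff \<alpha> u * ff \<alpha> v" using uS unfolding S_def by simp
    have dh: "((\<lambda>x. 1 + k * ff \<alpha> x * ff \<alpha> v) has_field_derivative k * ffd \<alpha> u * ff \<alpha> v) (at u)"
      by (rule derivative_eq_intros ff_deriv refl)+ simp
    have dq: "((\<lambda>x. ff \<alpha> x / (1 + k * ff \<alpha> x * ff \<alpha> v)) has_field_derivative
        (ffd \<alpha> u * (1 + k * ff \<alpha> u * ff \<alpha> v) - ff \<alpha> u * (k * ffd \<alpha> u * ff \<alpha> v)) /
        ((1 + k * ff \<alpha> u * ff \<alpha> v) * (1 + k * ff \<alpha> u * ff \<alpha> v))) (at u)"
      by (rule DERIV_divide[OF ff_deriv dh]) (use u0 in simp)
    have dG: "(G has_field_derivative k * ffd \<alpha> v * ((ffd \<alpha> u * (1 + k * ff \<alpha> u * ff \<alpha> v) - ff \<alpha> u * (k * ffd \<alpha> u * ff \<alpha> v)) /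
        ((1 + k * ff \<alpha> u * ff \<alpha> v) * (1 + k * ff \<alpha> u * ff \<alpha> v)))) (at u)"
      unfolding G_def by (rule DERIV_cmult[OF dq])
    have "k * ffd \<alpha> v * ((ffd \<alpha> u * (1 + k * ff \<alpha> u * ff \<alpha> v) - ff \<alpha> u * (k * ffd \<alpha> u * ff \<alpha> v)) /
        ((1 + k * ff \<alpha> u * ff \<alpha> v) * (1 + k * ff \<alpha> u * ff \<alpha> v))) = D"
      unfolding D_def using u0 by (simp add: power2_eq_square algebra_simps)
    with dG have "(G has_field_derivative D) (at u)" by simp
    then have "((\<lambda>x. deriv (\<lambda>y. ln (cdens \<alpha> \<delta> x y)) v) has_field_derivative D) (at u)"
      by (rule has_field_derivative_transform_within_open[OF _ \<open>open S\<close> uS]) (simp add: inner)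
    then have "deriv (\<lambda>x. deriv (\<lambda>y. ln (cdens \<alpha> \<delta> x y)) v) u = D" by (rule DERIV_imp_deriv)
    moreover have "D \<ge> 0"
    proof -
      have "0 \<le> ffd \<alpha> v * ffd \<alpha> u"
        using ffd_nonpos[of \<alpha> u] ffd_nonpos[of \<alpha> v] hu hv assms(1) by (simp add: mult_nonpos_nonpos)
      then have "0 \<le> k * (ffd \<alpha> v * ffd \<alpha> u)" using k0 by simp
      then show ?thesis unfolding D_def by (simp add: mult.assoc)
    qed
    ultimately show "deriv (\<lambda>x. deriv (\<lambda>y. ln (cdens \<alpha> \<delta> x y)) v) u \<ge> 0" by simp
  qed
qed

end
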